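(* Let $\tilde c_{g,1}$ be the number of NSG-compositions $x_1+\cdots+x_{m-1}$ of genus $g$ with $x_{m-1}=3$ and all other parts $x_1,\dots,x_{m-2}$ in $\{1,2\}$. Then $$\sum_{g\ge3}\tilde c_{g,1}q^g=\frac{1+q^2}{1-(2q^3+q^4)}\,q^3,$$ and in particular $\sum_g\tilde c_{g,1}\omega^{-g}=\omega^{-1}+\omega^{-3}=0.854101966\ldots$, where $\omega=\frac{1+\sqrt5}2$.
   Context: An NSG-composition is a composition $x_1+\cdots+x_{m-1}$ of positive integers satisfying $x_{s+t}\le x_s+x_t$ and $x_{m-s-t}\le x_{m-s}+x_{m-t}+1$ for all $s,t\ge1$, $s+t<m$ (equivalently, the Kunz vector of a numerical semigroup of multiplicity $m$); its genus is $\sum x_j$. *)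

theory Defs
  imports Complex_Main "HOL-Computational_Algebra.Formal_Power_Series"
begin

text \<open>A composition x_1 + ... + x_(m-1) is represented by the list xs of its parts,
  with x_j = xs ! (j - 1) and m = length xs + 1.\<close>

definition nsg_comp :: "nat list \<Rightarrow> bool" where
  "nsg_comp xs \<longleftrightarrow>
     (\<forall>j < length xs. 0 < xs ! j) \<and>
     (let m = length xs + 1; x = (\<lambda>j. xs ! (j - 1)) in
        \<forall>s t. 1 \<le> s \<longrightarrow> 1 \<le> t \<longrightarrow> s + t < m \<longrightarrow>
          x (s + t) \<le> x s + x t \<and> x (m - s - t) \<le> x (m - s) + x (m - t) + 1)"

definition genus :: "nat list \<Rightarrow> nat" where
  "genus xs = sum_list xs"

definition ctilde1 :: "nat \<Rightarrow> nat" where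
  "ctilde1 g = card {xs. nsg_comp xs \<and> genus xs = g \<and> xs \<noteq> [] \<and> last xs = 3 \<and>
                        (\<forall>i < length xs - 1. xs ! i \<in> {1, 2})}"

end

theory Submission
  imports Defs
begin

definition pal :: "nat list \<Rightarrow> bool" where
 "pal ys \<longleftrightarrow> list_all2 (\<lambda>a b. \<not>(a=1 \<and> b=1)) ys (rev ys)"

lemma pal_nth: "pal ys \<longleftrightarrow> (\<forall>i<length ys. \<not>(ys!i = 1 \<and> ys!(length ys - Suc i) = 1))"
  by (auto simp: pal_def list_all2_conv_all_nth rev_nth)

lemma nsg_iff:
  assumes S: "set ys \<subseteq> {1,2}"
  shows "nsg_comp (ys@[3]) \<longleftrightarrow> pal ys"
proof
  assume H: "nsg_comp (ys@[3])"
  show "pal ys" unfolding pal_nth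
  proof (intro allI impI notI)
    fix i assume i: "i < length ys" and c: "ys!i = 1 \<and> ys!(length ys - Suc i) = 1"
    define s where "s = Suc i"
    define t where "t = length ys - i"
    have A: "\<forall>s t. 1 \<le> s \<longrightarrow> 1 \<le> t \<longrightarrow> s+t < length (ys@[3]) + 1 \<longrightarrow> (ys@[3])!(s+t-1) \<le> (ys@[3])!(s-1) + (ys@[3])!(t-1)"
      using H unfolding nsg_comp_def Let_def by blast
    have "(ys@[3])!(s+t-1) \<le> (ys@[3])!(s-1) + (ys@[3])!(t-1)"
      using A[rule_format, of s t] i by (simp add: s_def t_def)
    moreover have "s+t-1 = length ys" "s - 1 = i" "t - 1 = length ys - Suc i"
      using i by (auto simp: s_def t_def)
    ultimately have "(ys@[3])!length ys \<le> (ys@[3])!i + (ys@[3])!(length ys - Suc i)" by simp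
    moreover have "length ys - Suc i < length ys" using i by simp
    ultimately show False using c i by (simp add: nth_append)
  qed
next
  assume P: "pal ys"
  let ?x = "\<lambda>j. (ys@[3])!(j-1)"
  let ?n = "length ys"
  have lo: "1 \<le> ?x j" if "1 \<le> j" "j \<le> ?n + 1" for j
  proof (cases "j \<le> ?n")
    case True
    then have "ys!(j-1) \<in> set ys" using that by auto
    then have "ys!(j-1) \<in> {1,2}" using S by blast
    then show ?thesis using True that by (auto simp: nth_append)
  next
    case False
    then have "j = Suc ?n" using that by simp
    then show ?thesis by (simp add: nth_append)
  qed
  have hi: "?x j \<le> 2" if "1 \<le> j" "j \<le> ?n" for j
  proof -
    have "ys!(j-1) \<in> set ys" using that by auto
    then have "ys!(j-1) \<in> {1,2}" using S by blast
    then show ?thesis using that by (auto simp: nth_append)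
  qed
  show "nsg_comp (ys@[3])" unfolding nsg_comp_def Let_def
  proof (intro conjI allI impI)
    fix j assume "j < length (ys@[3])"
    then show "0 < (ys@[3])!j" using lo[of "Suc j"] by simp
  next
    fix s t assume st: "1 \<le> s" "1 \<le> t" "s + t < length (ys@[3]) + 1"
    show "?x (s+t) \<le> ?x s + ?x t"
    proof (cases "s + t = ?n + 1")
      case True
      then have "?x (s+t) = 3" by (simp add: nth_append)
      moreover have "?x s = ys!(s-1)" "?x t = ys!(t-1)" using True st by (auto simp: nth_append)
      moreover have "ys!(s-1) \<in> set ys" "ys!(t-1) \<in> set ys" using True st by auto
      then have "ys!(s-1) \<in> {1,2}" "ys!(t-1) \<in> {1,2}" using S by blast+
      moreover have "s - 1 < ?n" using True st by simp
      moreover have "\<not>(ys!(s-1) = 1 \<and> ys!(?n - Suc (s-1)) = 1)" using P[unfolded pal_nth, rule_format, of "s-1"] \<open>s - 1 < ?n\<close> by blast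
      moreover have "?n - Suc (s-1) = t - 1" using True st by auto
      ultimately show ?thesis using S by auto
    next
      case False
      then show ?thesis using hi[of "s+t"] lo[of s] lo[of t] st by simp
    qed
  next
    fix s t assume st: "1 \<le> s" "1 \<le> t" "s + t < length (ys@[3]) + 1"
    show "?x (length (ys@[3]) + 1 - s - t) \<le> ?x (length (ys@[3]) + 1 - s) + ?x (length (ys@[3]) + 1 - t) + 1"
    proof -
      have a: "?x (?n + 2 - s - t) \<le> 2" by (rule hi) (use st in auto)
      have b: "1 \<le> ?x (?n + 2 - s)" by (rule lo) (use st in auto)
      have c: "1 \<le> ?x (?n + 2 - t)" by (rule lo) (use st in auto)
      show ?thesis using a b c by simp
    qed
  qed
qed

lemma pal_cs: "pal (a#zs@[b]) \<longleftrightarrow> \<not>(a=1\<and>b=1) \<and> pal zs"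
  by (auto simp: pal_def list_all2_append)

definition P :: "nat \<Rightarrow> nat list set" where
  "P h = {ys. set ys \<subseteq> {1,2} \<and> pal ys \<and> sum_list ys = h}"

lemma split2: "2 \<le> length ys \<Longrightarrow> \<exists>a zs b. ys = a#zs@[b]"
  by (cases ys; cases "tl ys" rule: rev_exhaust) auto

lemma P_char: "ys \<in> P h \<longleftrightarrow> (ys = [] \<and> h=0) \<or> (ys=[2] \<and> h=2)
  \<or> (\<exists>zs. zs \<in> P(h-3) \<and> 3 \<le> h \<and> ys = 1#zs@[2])
  \<or> (\<exists>zs. zs \<in> P(h-3) \<and> 3 \<le> h \<and> ys = 2#zs@[1])
  \<or> (\<exists>zs. zs \<in> P(h-4) \<and> 4 \<le> h \<and> ys = 2#zs@[2])"
proof (cases "2 \<le> length ys")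
  case True
  then obtain a zs b where y: "ys = a#zs@[b]" using split2 by blast
  show ?thesis unfolding y P_def by (auto simp: pal_cs)
next
  case False
  then consider "ys = []" | a where "ys = [a]" by (cases ys; cases "tl ys") auto
  then show ?thesis by cases (auto simp: P_def pal_def)
qed

fun f :: "nat \<Rightarrow> nat" where
"f 0 = 1" | "f (Suc 0) = 0" | "f (Suc (Suc 0)) = 1" | "f (Suc (Suc (Suc 0))) = 2"
| "f (Suc (Suc (Suc (Suc n)))) = 2 * f (Suc n) + f n"

lemma inj_cs: "inj_on (\<lambda>zs. a#zs@[b]) X" by (auto simp: inj_on_def)

lemma P_card: "finite (P h) \<and> card (P h) = f h"
proof (induction h rule: f.induct)
  case 1
  have "P 0 = {[]}" using P_char[of _ 0] by auto
  then show ?case by simp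
next
  case 2
  have "P 1 = {}" using P_char[of _ 1] by auto
  then show ?case by simp
next
  case 3
  have "P 2 = {[2]}" using P_char[of _ 2] by auto
  then show ?case by (simp add: numeral_2_eq_2)
next
  case 4
  have P0: "P 0 = {[]}" using P_char[of _ 0] by auto
  have "P 3 = {[1,2],[2,1]}" using P_char[of _ 3] P0 by auto
  then show ?case by (simp add: numeral_3_eq_3)
next
  case (5 n)
  let ?h = "Suc (Suc (Suc (Suc n)))"
  have e: "P ?h = (\<lambda>zs. 1#zs@[2]) ` P (Suc n) \<union> (\<lambda>zs. 2#zs@[1]) ` P (Suc n) \<union> (\<lambda>zs. 2#zs@[2]) ` P n"
    using P_char[of _ ?h] by (auto simp: numeral_3_eq_3 numeral_eq_Suc)
  have d1: "(\<lambda>zs. 1#zs@[2]) ` P (Suc n) \<inter> (\<lambda>zs. 2#zs@[1]) ` P (Suc n) = {}" by auto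
  have d2: "((\<lambda>zs. 1#zs@[2]) ` P (Suc n) \<union> (\<lambda>zs. 2#zs@[1]) ` P (Suc n)) \<inter> (\<lambda>zs. 2#zs@[2]) ` P n = {}" by auto
  have f1: "finite (P (Suc n))" "finite (P n)" using 5 by auto
  have "card (P ?h) = card ((\<lambda>zs. 1#zs@[2]) ` P (Suc n) \<union> (\<lambda>zs. 2#zs@[1]) ` P (Suc n)) + card ((\<lambda>zs. 2#zs@[2]) ` P n)"
    unfolding e by (rule card_Un_disjoint[OF _ _ d2]) (use f1 in auto)
  also have "card ((\<lambda>zs. 1#zs@[2]) ` P (Suc n) \<union> (\<lambda>zs. 2#zs@[1]) ` P (Suc n)) = card ((\<lambda>zs. 1#zs@[2]) ` P (Suc n)) + card ((\<lambda>zs. 2#zs@[1]) ` P (Suc n))"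
    by (rule card_Un_disjoint[OF _ _ d1]) (use f1 in auto)
  also have "card ((\<lambda>zs. 1#zs@[2]) ` P (Suc n)) = f (Suc n)" using card_image[OF inj_cs] 5 by metis
  also have "card ((\<lambda>zs. 2#zs@[1]) ` P (Suc n)) = f (Suc n)" using card_image[OF inj_cs] 5 by metis
  also have "card ((\<lambda>zs. 2#zs@[2]) ` P n) = f n" using card_image[OF inj_cs] 5 by metis
  finally show ?case using e f1 by simp
qed

lemma ctilde1_eq: "ctilde1 g = (if 3 \<le> g then f (g-3) else 0)"
proof -
  have "{xs. nsg_comp xs \<and> genus xs = g \<and> xs \<noteq> [] \<and> last xs = 3 \<and>
                        (\<forall>i < length xs - 1. xs ! i \<in> {1, 2})}
     = (\<lambda>ys. ys@[3]) ` {ys. set ys \<subseteq> {1,2} \<and> pal ys \<and> sum_list ys + 3 = g}"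
  proof (rule set_eqI, rule iffI)
    fix xs assume "xs \<in> {xs. nsg_comp xs \<and> genus xs = g \<and> xs \<noteq> [] \<and> last xs = 3 \<and>
                        (\<forall>i < length xs - 1. xs ! i \<in> {1, 2})}"
    then have a: "nsg_comp xs" "genus xs = g" "xs \<noteq> []" "last xs = 3" "\<forall>i < length xs - 1. xs ! i \<in> {1, 2}" by auto
    obtain ys where y: "xs = ys @ [3]" using a(3,4) by (metis append_butlast_last_id)
    have s: "set ys \<subseteq> {1,2}"
    proof
      fix z assume "z \<in> set ys"
      then obtain i where "i < length ys" "ys!i = z" by (auto simp: in_set_conv_nth)
      then show "z \<in> {1,2}" using a(5) y by (auto simp: nth_append)
    qed
    show "xs \<in> (\<lambda>ys. ys@[3]) ` {ys. set ys \<subseteq> {1,2} \<and> pal ys \<and> sum_list ys + 3 = g}"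
      using a(1,2) s nsg_iff[OF s] y by (auto simp: genus_def)
  next
    fix xs assume "xs \<in> (\<lambda>ys. ys@[3]) ` {ys. set ys \<subseteq> {1,2} \<and> pal ys \<and> sum_list ys + 3 = g}"
    then obtain ys where y: "xs = ys@[3]" "set ys \<subseteq> {1,2}" "pal ys" "sum_list ys + 3 = g" by auto
    have "\<forall>i < length xs - 1. xs ! i \<in> {1, 2}" using y(1,2) nth_mem by (fastforce simp: nth_append)
    then show "xs \<in> {xs. nsg_comp xs \<and> genus xs = g \<and> xs \<noteq> [] \<and> last xs = 3 \<and>
                        (\<forall>i < length xs - 1. xs ! i \<in> {1, 2})}"
      using y nsg_iff[OF y(2)] by (auto simp: genus_def)
  qed
  moreover have "{ys. set ys \<subseteq> {1,2} \<and> pal ys \<and> sum_list ys + 3 = g} = (if 3 \<le> g then P (g-3) else {})"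
    by (auto simp: P_def)
  ultimately show ?thesis unfolding ctilde1_def
    using P_card[of "g-3"] by (simp add: card_image inj_on_def)
qed


lemma f_rec: "real (f h) = (if h=0 then 1 else 0) + (if h=2 then 1 else 0)
   + (if 3 \<le> h then 2 * real (f (h-3)) else 0) + (if 4 \<le> h then real (f (h-4)) else 0)"
  by (cases h rule: f.cases) (simp_all add: numeral_eq_Suc)

lemma fpsB: "(1 - (2 * fps_X ^ 3 + fps_X ^ 4)) * Abs_fps (\<lambda>h. real (f h)) = (1 + fps_X ^ 2 :: real fps)"
proof -
  let ?B = "Abs_fps (\<lambda>h. real (f h))"
  have "(1 - (2 * fps_X ^ 3 + fps_X ^ 4)) * ?B = ?B - (fps_X^3 * ?B + fps_X^3 * ?B) - fps_X^4 * ?B"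
    by (simp only: left_diff_distrib distrib_right mult_2 mult_1_left diff_diff_eq)
  also have "\<dots> = 1 + fps_X ^ 2"
  proof (rule fps_ext)
    fix n
    have "real (f n) = (if n=0 then 1 else 0) + (if n=2 then 1 else 0)
   + (if 3 \<le> n then 2 * real (f (n-3)) else 0) + (if 4 \<le> n then real (f (n-4)) else 0)" by (rule f_rec)
    then show "fps_nth (?B - (fps_X^3 * ?B + fps_X^3 * ?B) - fps_X^4 * ?B) n = fps_nth (1 + fps_X ^ 2 :: real fps) n"
      unfolding fps_sub_nth fps_add_nth fps_X_power_mult_nth fps_X_power_nth fps_one_nth fps_nth_Abs_fps
      by (auto split: if_splits)
  qed
  finally show ?thesis .
qed

lemma part1: "Abs_fps (\<lambda>g. if 3 \<le> g then real (ctilde1 g) else 0)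
     = (1 + fps_X ^ 2) / (1 - (2 * fps_X ^ 3 + fps_X ^ 4)) * fps_X ^ 3"
proof -
  let ?B = "Abs_fps (\<lambda>h. real (f h))"
  let ?D = "1 - (2 * fps_X ^ 3 + fps_X ^ 4) :: real fps"
  have D0: "fps_nth ?D 0 = 1" by simp
  have D: "?D \<noteq> 0" using D0 by (metis fps_zero_nth zero_neq_one)
  have "(1 + fps_X ^ 2) / ?D = ?B" using fpsB D by (metis nonzero_mult_div_cancel_left)
  moreover have "Abs_fps (\<lambda>g. if 3 \<le> g then real (ctilde1 g) else 0) = ?B * fps_X ^ 3"
  proof (rule fps_ext)
    fix n show "fps_nth (Abs_fps (\<lambda>g. if 3 \<le> g then real (ctilde1 g) else 0)) n = fps_nth (?B * fps_X ^ 3) n"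
      unfolding fps_X_power_mult_right_nth fps_nth_Abs_fps ctilde1_eq by simp
  qed
  ultimately show ?thesis by simp
qed


lemma f_bound: "real (f h) \<le> (3/2)^h"
proof (induction h rule: f.induct)
  case (5 n)
  have "real (f (Suc (Suc (Suc (Suc n))))) = 2 * real (f (Suc n)) + real (f n)" by simp
  also have "\<dots> \<le> 2 * (3/2)^(Suc n) + (3/2)^n" using 5 by simp
  also have "\<dots> = (3/2)^n * 4" by simp
  also have "\<dots> \<le> (3/2)^n * (81/16)" by simp
  also have "\<dots> = (3/2)^(Suc (Suc (Suc (Suc n))))" by simp
  finally show ?case .
qed (simp_all add: numeral_eq_Suc)

lemma part2:
  fixes q :: real
  assumes q: "q = 1 / ((1 + sqrt 5) / 2)"
  shows "(\<lambda>g. real (ctilde1 g) * q ^ g) sums (q + q ^ 3)"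
    and "\<bar>(q + q ^ 3) - 0.854101966\<bar> < 1 / 10 ^ 9"
proof -
  define s where "s = sqrt 5"
  have s2: "s * s = 5" by (simp add: s_def)
  have s0: "s \<ge> 0" by (simp add: s_def)
  have qs: "q = (s - 1) / 2"
  proof -
    have "(1 + s) \<noteq> 0" using s0 by simp
    then show ?thesis unfolding q s_def[symmetric] using s2 by (simp add: field_simps)
  qed
  have q2: "q^2 = 1 - q" unfolding qs power2_eq_square using s2 by (simp add: field_simps)
  have s_lo: "2 < s"
  proof (rule ccontr)
    assume "\<not> 2 < s" then have "s \<le> 2" by simp
    then have "s * s \<le> 2 * 2" using s0 by (intro mult_mono) auto
    then show False using s2 by simp
  qed
  have s_hi: "s < 7/3"
  proof (rule ccontr)
    assume "\<not> s < 7/3" then have "7/3 \<le> s" by simp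
    then have "7/3 * (7/3) \<le> s * s" by (intro mult_mono) auto
    then show False using s2 by simp
  qed
  have q0: "0 < q" using qs s_lo by simp
  have q23: "3/2 * q < 1" using qs s_hi by simp
  define b where "b h = real (f h) * q ^ h" for h
  have bsum: "summable b"
  proof (rule summable_comparison_test')
    show "summable (\<lambda>n. (3/2 * q) ^ n)" by (rule summable_geometric) (use q0 q23 in simp)
    fix n
    have "norm (b n) = real (f n) * q ^ n" using q0 by (simp add: b_def)
    also have "\<dots> \<le> (3/2)^n * q^n" using f_bound[of n] q0 by (intro mult_right_mono) auto
    also have "\<dots> = (3/2*q)^n" by (rule power_mult_distrib[symmetric])
    finally show "norm (b n) \<le> (3/2 * q) ^ n" .
  qed
  define S where "S = suminf b"
  have bS: "b sums S" using bsum by (simp add: S_def summable_sums)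
  have sh: "(\<lambda>i. b (i + k)) sums (S - sum b {..<k})" for k
    using bS sums_iff_shift[of b k "S - sum b {..<k}"] by simp
  have "(\<lambda>i. 2 * q^3 * b (i + 1) + q^4 * b i) sums (2 * q^3 * (S - sum b {..<1}) + q^4 * S)"
    by (intro sums_add sums_mult sh bS)
  moreover have "(\<lambda>i. 2 * q^3 * b (i + 1) + q^4 * b i) = (\<lambda>i. b (i + 4))"
  proof
    fix i
    have "f (i + 4) = 2 * f (i + 1) + f i" by (simp add: numeral_eq_Suc)
    then have fe: "real (f (i + 4)) = 2 * real (f (i + 1)) + real (f i)" by simp
    have e: "q^(i+4) = q^i * q^3 * q" "q^(i+1) = q^i*q" "q^4 = q^3 * q"
      by (simp_all add: power_add power_Suc numeral_eq_Suc)
    show "2 * q^3 * b (i + 1) + q^4 * b i = b (i + 4)"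
      unfolding b_def e fe by (simp add: algebra_simps)
  qed
  ultimately have "(\<lambda>i. b (i + 4)) sums (2 * q^3 * (S - sum b {..<1}) + q^4 * S)" by simp
  with sh[of 4] have eq: "S - sum b {..<4} = 2 * q^3 * (S - sum b {..<1}) + q^4 * S"
    using sums_unique2 by blast
  have "sum b {..<4} = 1 + q^2 + 2 * q^3"
    by (simp add: b_def numeral_eq_Suc lessThan_Suc)
  moreover have "sum b {..<1} = 1" by (simp add: b_def)
  ultimately have eq2: "S * (1 - 2*q^3 - q^4) = 1 + q^2" using eq by (simp add: algebra_simps)
  have q3: "q^3 = 2*q - 1"
  proof -
    have "q^3 = q*q^2" by (simp add: power3_eq_cube power2_eq_square)
    also have "\<dots> = q*(1-q)" using q2 by simp
    also have "\<dots> = q - q^2" by (simp add: algebra_simps power2_eq_square)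
    also have "\<dots> = 2*q-1" using q2 by simp
    finally show ?thesis .
  qed
  have q4: "q^4 = 2 - 3*q"
  proof -
    have "q^4 = q*q^3" by (simp add: power3_eq_cube power4_eq_xxxx)
    also have "\<dots> = q*(2*q-1)" using q3 by simp
    also have "\<dots> = 2*q^2 - q" by (simp add: algebra_simps power2_eq_square)
    also have "\<dots> = 2-3*q" using q2 by simp
    finally show ?thesis .
  qed
  have "1 - 2*q^3 - q^4 = q^2" using q2 q3 q4 by simp
  with eq2 have eq3: "S * q^2 = 1 + q^2" by simp
  have tot: "q^3 * S = q + q^3"
  proof -
    have "q^3 * S = q * (S * q^2)" by (simp add: power2_eq_square power3_eq_cube)
    also have "\<dots> = q + q^3" using eq3 by (simp add: algebra_simps power2_eq_square power3_eq_cube)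
    finally show ?thesis .
  qed
  have "(\<lambda>i. q^3 * b i) sums (q^3 * S)" by (intro sums_mult bS)
  moreover have "(\<lambda>i. q^3 * b i) = (\<lambda>i. real (ctilde1 (i+3)) * q ^ (i+3))"
    by (auto simp: b_def ctilde1_eq power_add)
  ultimately have "(\<lambda>i. real (ctilde1 (i+3)) * q ^ (i+3)) sums (q + q^3)" using tot by simp
  then show "(\<lambda>g. real (ctilde1 g) * q ^ g) sums (q + q ^ 3)"
    by (subst (asm) sums_zero_iff_shift) (auto simp: ctilde1_eq)
  have val0: "q + q^3 = 3*q - 1" using q3 by simp
  have "3*q - 1 = (3*s - 5)/2" using qs by simp
  with val0 have val: "q + q^3 = (3*s - 5)/2" by simp
  have l: "2.2360679774 < s"
  proof (rule ccontr)
    assume "\<not> 2.2360679774 < s" then have "s \<le> 2.2360679774" by simp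
    then have "s * s \<le> 2.2360679774 * 2.2360679774" using s0 by (intro mult_mono) auto
    then show False using s2 by simp
  qed
  have h: "s < 2.2360679776"
  proof (rule ccontr)
    assume "\<not> s < 2.2360679776" then have "2.2360679776 \<le> s" by simp
    then have "2.2360679776 * 2.2360679776 \<le> s * s" by (intro mult_mono) auto
    then show False using s2 by simp
  qed
  show "\<bar>(q + q ^ 3) - 0.854101966\<bar> < 1 / 10 ^ 9" unfolding val using l h by simp
qed

theorem proposition16p2:
  "Abs_fps (\<lambda>g. if 3 \<le> g then real (ctilde1 g) else 0)
     = (1 + fps_X ^ 2) / (1 - (2 * fps_X ^ 3 + fps_X ^ 4)) * fps_X ^ 3
   \<and> (let \<omega> = (1 + sqrt 5) / 2 :: real in
        (\<lambda>g. real (ctilde1 g) * (1 / \<omega>) ^ g) sums (1 / \<omega> + (1 / \<omega>) ^ 3)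
      \<and> \<bar>(1 / \<omega> + (1 / \<omega>) ^ 3) - 0.854101966\<bar> < 1 / 10 ^ 9)"
  unfolding Let_def
  using part1 part2[of "1 / ((1 + sqrt 5) / 2)"] by simp

end
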